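(* Let $h(t)\in\mathbb{R}^l$ and $z(t)\in\mathbb{R}^p$ be processes such that $s(t)=\begin{bmatrix} z(t)\\ h(t)\end{bmatrix}$ is RC and, for every $t\in\mathbb{Z}$, all coordinates of $z(t)$ are orthogonal to $H^h_t$. Then for every $w\in\Sigma^+$ and every $t\in\mathbb{Z}$, all coordinates of $z^z_w(t)$ are orthogonal to $H^h_{t,w}$.
   Context: Setting (RC framework). All random variables on one probability space. $\Sigma$ finite alphabet, $\Sigma^*$ finite words ($\epsilon$ empty), $\Sigma^+=\Sigma^*\setminus\{\epsilon\}$, $|w|$ length. Fix $p_\sigma>0$; $p_\epsilon=1$, $p_{\sigma_1\cdots\sigma_k}=\prod_i p_{\sigma_i}$. Inputs: scalar processes $u_\sigma(t)$ with $\sum_\sigma\alpha_\sigma u_\sigma(t)=1$ for constants $\alpha_\sigma$, all first/second moments of $u_w(t)$ finite, where $u_w(t)=u_{\sigma_1}(t-k+1)u_{\sigma_2}(t-k+2)\cdots u_{\sigma_k}(t)$ for $w=\sigma_1\cdots\sigma_k$. $z^r_w(t)=r(t-|w|)u_w(t-1)/\sqrt{p_w}$. Admissible set $L\subseteq\Sigma^+$: $\Sigma\subseteq L$; $u_w=0$ a.s. for $w\notin L$; for some $S\subseteq\Sigma\times\Sigma$, a word of length $>1$ is in $L$ iff all its consecutive letter pairs are in $S$. A process $r$ is RC if: (1) $E[r(t)]=0$, $E[z^r_w(t)]=0$, $E[r(t)z^r_w(t)^T]$, $E[z^r_w(t)z^r_v(t)^T]$ finite and independent of $t$; $T^r_{w,v}:=E[z^r_w(t)z^r_v(t)^T]$,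 $\Lambda^r_w:=E[r(t)z^r_w(t)^T]$; (2) $T^r_{\sigma,\sigma'}=0$ for $\sigma\ne\sigma'$; $T^r_{w\sigma,v\sigma'}=0$ for $\sigma\neq\sigma'$ and $T^r_{w\sigma,v\sigma}=T^r_{w,v}$ if $w\sigma\in L$ or $v\sigma\in L$; $T^r_{w\sigma,\sigma'}=0$ for $\sigma\ne\sigma'$ and $T^r_{w\sigma,\sigma}=(\Lambda^r_w)^T$; (3) $T^r_{w,v}=0$ if $w\notin L$ or $v\notin L$; if $w\sigma\in L$ and $v\sigma\notin L$ then $T^r_{v,w}=T^r_{w,v}=0$. Hilbert space generated by random vectors = mean-square closure of span of their coordinates. $H^h_t$: generated by $\{z^h_v(t)\mid v\in\Sigma^+\}$; $H^h_{t,w}$: generated by $\{z^h_{vw}(t)\mid v\in\Sigma^+\}$. *)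

theory Defs
  imports "HOL-Probability.Probability"
begin

text \<open>Words over the alphabet 'sigma are lists; the word sigma1...sigmak is the list
  [sigma1,...,sigmak]; appending a letter on the right is w @ [sigma].\<close>

definition pw :: "('s \<Rightarrow> real) \<Rightarrow> 's list \<Rightarrow> real" where
  "pw p w = (\<Prod>i<length w. p (w ! i))"

definition uw :: "('s \<Rightarrow> int \<Rightarrow> 'a \<Rightarrow> real) \<Rightarrow> 's list \<Rightarrow> int \<Rightarrow> 'a \<Rightarrow> real" where
  "uw u w t \<omega> = (\<Prod>i<length w. u (w ! i) (t - int (length w) + 1 + int i) \<omega>)"

definition zr :: "('s \<Rightarrow> real) \<Rightarrow> ('s \<Rightarrow> int \<Rightarrow> 'a \<Rightarrow> real) \<Rightarrow> (int \<Rightarrow> 'a \<Rightarrow> real^'n)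
    \<Rightarrow> 's list \<Rightarrow> int \<Rightarrow> 'a \<Rightarrow> real^'n" where
  "zr p u r w t \<omega> = (uw u w (t - 1) \<omega> / sqrt (pw p w)) *\<^sub>R r (t - int (length w)) \<omega>"

definition inputs_ok :: "'a measure \<Rightarrow> ('s::finite \<Rightarrow> real) \<Rightarrow> ('s \<Rightarrow> int \<Rightarrow> 'a \<Rightarrow> real) \<Rightarrow> bool" where
  "inputs_ok M p u \<longleftrightarrow>
     (\<forall>\<sigma>. p \<sigma> > 0) \<and>
     (\<exists>\<alpha>::'s \<Rightarrow> real. \<forall>t. \<forall>\<omega>\<in>space M. (\<Sum>\<sigma>\<in>UNIV. \<alpha> \<sigma> * u \<sigma> t \<omega>) = 1) \<and>
     (\<forall>w t. integrable M (uw u w t) \<and> integrable M (\<lambda>\<omega>. (uw u w t \<omega>)\<^sup>2))"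

definition admissible :: "'a measure \<Rightarrow> ('s \<Rightarrow> int \<Rightarrow> 'a \<Rightarrow> real) \<Rightarrow> 's list set \<Rightarrow> bool" where
  "admissible M u L \<longleftrightarrow>
     [] \<notin> L \<and>
     (\<forall>\<sigma>. [\<sigma>] \<in> L) \<and>
     (\<forall>w. w \<noteq> [] \<and> w \<notin> L \<longrightarrow> (\<forall>t. AE \<omega> in M. uw u w t \<omega> = 0)) \<and>
     (\<exists>S. \<forall>w. length w > 1 \<longrightarrow>
            (w \<in> L \<longleftrightarrow> (\<forall>i. i + 1 < length w \<longrightarrow> (w ! i, w ! (i + 1)) \<in> S)))"

text \<open>T^r_{w,v} = E[z^r_w(t) z^r_v(t)^T] and Lambda^r_w = E[r(t) z^r_w(t)^T] (evaluated at t = 0;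
  independence of t is part of the RC definition).\<close>
definition Tmat :: "'a measure \<Rightarrow> ('s \<Rightarrow> real) \<Rightarrow> ('s \<Rightarrow> int \<Rightarrow> 'a \<Rightarrow> real) \<Rightarrow> (int \<Rightarrow> 'a \<Rightarrow> real^'n)
    \<Rightarrow> 's list \<Rightarrow> 's list \<Rightarrow> real^'n^'n" where
  "Tmat M p u r w v = (\<chi> i j. integral\<^sup>L M (\<lambda>\<omega>. zr p u r w 0 \<omega> $ i * zr p u r v 0 \<omega> $ j))"

definition Lmat :: "'a measure \<Rightarrow> ('s \<Rightarrow> real) \<Rightarrow> ('s \<Rightarrow> int \<Rightarrow> 'a \<Rightarrow> real) \<Rightarrow> (int \<Rightarrow> 'a \<Rightarrow> real^'n)
    \<Rightarrow> 's list \<Rightarrow> real^'n^'n" where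
  "Lmat M p u r w = (\<chi> i j. integral\<^sup>L M (\<lambda>\<omega>. r 0 \<omega> $ i * zr p u r w 0 \<omega> $ j))"

definition RC :: "'a measure \<Rightarrow> ('s \<Rightarrow> real) \<Rightarrow> ('s \<Rightarrow> int \<Rightarrow> 'a \<Rightarrow> real) \<Rightarrow> 's list set
    \<Rightarrow> (int \<Rightarrow> 'a \<Rightarrow> real^'n) \<Rightarrow> bool" where
  "RC M p u L r \<longleftrightarrow>
     \<comment> \<open>(1)\<close>
     (\<forall>t i. integrable M (\<lambda>\<omega>. r t \<omega> $ i) \<and> integral\<^sup>L M (\<lambda>\<omega>. r t \<omega> $ i) = 0) \<and>
     (\<forall>w t i. w \<noteq> [] \<longrightarrow> integrable M (\<lambda>\<omega>. zr p u r w t \<omega> $ i) \<and>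
                           integral\<^sup>L M (\<lambda>\<omega>. zr p u r w t \<omega> $ i) = 0) \<and>
     (\<forall>w t i j. w \<noteq> [] \<longrightarrow> integrable M (\<lambda>\<omega>. r t \<omega> $ i * zr p u r w t \<omega> $ j) \<and>
        integral\<^sup>L M (\<lambda>\<omega>. r t \<omega> $ i * zr p u r w t \<omega> $ j)
        = integral\<^sup>L M (\<lambda>\<omega>. r 0 \<omega> $ i * zr p u r w 0 \<omega> $ j)) \<and>
     (\<forall>w v t i j. w \<noteq> [] \<longrightarrow> v \<noteq> [] \<longrightarrow>
        integrable M (\<lambda>\<omega>. zr p u r w t \<omega> $ i * zr p u r v t \<omega> $ j) \<and>
        integral\<^sup>L M (\<lambda>\<omega>. zr p u r w t \<omega> $ i * zr p u r v t \<omega> $ j)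
        = integral\<^sup>L M (\<lambda>\<omega>. zr p u r w 0 \<omega> $ i * zr p u r v 0 \<omega> $ j)) \<and>
     \<comment> \<open>(2)\<close>
     (\<forall>\<sigma> \<sigma>'. \<sigma> \<noteq> \<sigma>' \<longrightarrow> Tmat M p u r [\<sigma>] [\<sigma>'] = 0) \<and>
     (\<forall>w v \<sigma> \<sigma>'. w \<noteq> [] \<longrightarrow> v \<noteq> [] \<longrightarrow> \<sigma> \<noteq> \<sigma>' \<longrightarrow>
        Tmat M p u r (w @ [\<sigma>]) (v @ [\<sigma>']) = 0) \<and>
     (\<forall>w v \<sigma>. w \<noteq> [] \<longrightarrow> v \<noteq> [] \<longrightarrow> (w @ [\<sigma>] \<in> L \<or> v @ [\<sigma>] \<in> L) \<longrightarrow>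
        Tmat M p u r (w @ [\<sigma>]) (v @ [\<sigma>]) = Tmat M p u r w v) \<and>
     (\<forall>w \<sigma> \<sigma>'. w \<noteq> [] \<longrightarrow> \<sigma> \<noteq> \<sigma>' \<longrightarrow> Tmat M p u r (w @ [\<sigma>]) [\<sigma>'] = 0) \<and>
     (\<forall>w \<sigma>. w \<noteq> [] \<longrightarrow> Tmat M p u r (w @ [\<sigma>]) [\<sigma>] = transpose (Lmat M p u r w)) \<and>
     \<comment> \<open>(3)\<close>
     (\<forall>w v. w \<noteq> [] \<longrightarrow> v \<noteq> [] \<longrightarrow> (w \<notin> L \<or> v \<notin> L) \<longrightarrow> Tmat M p u r w v = 0) \<and>
     (\<forall>w v \<sigma>. w \<noteq> [] \<longrightarrow> v \<noteq> [] \<longrightarrow> w @ [\<sigma>] \<in> L \<longrightarrow> v @ [\<sigma>] \<notin> L \<longrightarrow>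
        Tmat M p u r v w = 0 \<and> Tmat M p u r w v = 0)"

definition lin_span_rv :: "('a \<Rightarrow> real) set \<Rightarrow> ('a \<Rightarrow> real) set" where
  "lin_span_rv G = {(\<lambda>\<omega>. \<Sum>i<n. c i * g i \<omega>) | (n::nat) (c::nat \<Rightarrow> real) (g::nat \<Rightarrow> 'a \<Rightarrow> real). \<forall>i<n. g i \<in> G}"

definition gen_hilbert :: "'a measure \<Rightarrow> ('a \<Rightarrow> real) set \<Rightarrow> ('a \<Rightarrow> real) set" where
  "gen_hilbert M G = {X. X \<in> borel_measurable M \<and> integrable M (\<lambda>\<omega>. (X \<omega>)\<^sup>2) \<and>
     (\<exists>Y. (\<forall>n. Y n \<in> lin_span_rv G) \<and>
          (\<lambda>n. integral\<^sup>L M (\<lambda>\<omega>. (X \<omega> - Y n \<omega>)\<^sup>2)) \<longlonglongrightarrow> 0)}"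

definition orth_to :: "'a measure \<Rightarrow> ('a \<Rightarrow> real) \<Rightarrow> ('a \<Rightarrow> real) set \<Rightarrow> bool" where
  "orth_to M X H \<longleftrightarrow> (\<forall>Y\<in>H. integrable M (\<lambda>\<omega>. X \<omega> * Y \<omega>) \<and> integral\<^sup>L M (\<lambda>\<omega>. X \<omega> * Y \<omega>) = 0)"

definition Hspace :: "'a measure \<Rightarrow> ('s \<Rightarrow> real) \<Rightarrow> ('s \<Rightarrow> int \<Rightarrow> 'a \<Rightarrow> real)
    \<Rightarrow> (int \<Rightarrow> 'a \<Rightarrow> real^'n) \<Rightarrow> int \<Rightarrow> ('a \<Rightarrow> real) set" where
  "Hspace M p u h t = gen_hilbert M {(\<lambda>\<omega>. zr p u h v t \<omega> $ i) | v i. v \<noteq> []}"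

definition Hspace_w :: "'a measure \<Rightarrow> ('s \<Rightarrow> real) \<Rightarrow> ('s \<Rightarrow> int \<Rightarrow> 'a \<Rightarrow> real)
    \<Rightarrow> (int \<Rightarrow> 'a \<Rightarrow> real^'n) \<Rightarrow> int \<Rightarrow> 's list \<Rightarrow> ('a \<Rightarrow> real) set" where
  "Hspace_w M p u h t w = gen_hilbert M {(\<lambda>\<omega>. zr p u h (v @ w) t \<omega> $ i) | v i. v \<noteq> []}"

definition stack :: "(int \<Rightarrow> 'a \<Rightarrow> real^'p) \<Rightarrow> (int \<Rightarrow> 'a \<Rightarrow> real^'l) \<Rightarrow> int \<Rightarrow> 'a \<Rightarrow> real^('p + 'l)" where
  "stack z h t \<omega> = (\<chi> k. case k of Inl i \<Rightarrow> z t \<omega> $ i | Inr j \<Rightarrow> h t \<omega> $ j)"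

end

theory Submission
  imports Defs
begin

lemma sq_int_prod:
  fixes X Y :: "'a \<Rightarrow> real"
  assumes "X \<in> borel_measurable M" "Y \<in> borel_measurable M"
    "integrable M (\<lambda>\<omega>. (X \<omega>)\<^sup>2)" "integrable M (\<lambda>\<omega>. (Y \<omega>)\<^sup>2)"
  shows "integrable M (\<lambda>\<omega>. X \<omega> * Y \<omega>)"
proof (rule Bochner_Integration.integrable_bound[of _ "\<lambda>\<omega>. (X \<omega>)\<^sup>2 + (Y \<omega>)\<^sup>2"])
  show "integrable M (\<lambda>\<omega>. (X \<omega>)\<^sup>2 + (Y \<omega>)\<^sup>2)" using assms by auto
  show "(\<lambda>\<omega>. X \<omega> * Y \<omega>) \<in> borel_measurable M" using assms by measurable
  show "AE x in M. norm (X x * Y x) \<le> norm ((X x)\<^sup>2 + (Y x)\<^sup>2)"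
  proof (rule AE_I2)
    fix x
    have "2 * (\<bar>X x\<bar> * \<bar>Y x\<bar>) \<le> (X x)\<^sup>2 + (Y x)\<^sup>2"
      using sum_squares_bound[of "\<bar>X x\<bar>" "\<bar>Y x\<bar>"] by (simp add: power2_abs mult.assoc)
    moreover have "0 \<le> \<bar>X x\<bar> * \<bar>Y x\<bar>" by simp
    ultimately have "\<bar>X x\<bar> * \<bar>Y x\<bar> \<le> \<bar>(X x)\<^sup>2 + (Y x)\<^sup>2\<bar>" by linarith
    then show "norm (X x * Y x) \<le> norm ((X x)\<^sup>2 + (Y x)\<^sup>2)"
      by (simp add: abs_mult)
  qed
qed

lemma span_props:
  fixes G :: "('a \<Rightarrow> real) set"
  assumes "\<forall>g\<in>G. \<forall>g'\<in>G. integrable M (\<lambda>\<omega>. g \<omega> * g' \<omega>)" "\<forall>g\<in>G. g \<in> borel_measurable M"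
    "Y \<in> lin_span_rv G"
  shows "Y \<in> borel_measurable M \<and> integrable M (\<lambda>\<omega>. (Y \<omega>)\<^sup>2)"
proof -
  obtain n c g where Y: "Y = (\<lambda>\<omega>. \<Sum>i<(n::nat). c i * g i \<omega>)" and g: "\<forall>i<n. g i \<in> G"
  proof -
    have "\<exists>n c g. Y = (\<lambda>\<omega>. \<Sum>i<(n::nat). c i * g i \<omega>) \<and> (\<forall>i<n. g i \<in> G)"
      using assms(3) unfolding lin_span_rv_def by simp
    then show ?thesis using that by blast
  qed
  have "Y \<in> borel_measurable M" unfolding Y using g assms(2) by (auto intro!: borel_measurable_sum borel_measurable_times)
  moreover have "(\<lambda>\<omega>. (Y \<omega>)\<^sup>2) = (\<lambda>\<omega>. \<Sum>i<n. \<Sum>k<n. c i * c k * (g i \<omega> * g k \<omega>))"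
    unfolding Y power2_eq_square sum_product by (auto simp: algebra_simps)
  moreover have "integrable M (\<lambda>\<omega>. \<Sum>i<n. \<Sum>k<n. c i * c k * (g i \<omega> * g k \<omega>))"
    using g assms(1) by (intro Bochner_Integration.integrable_sum Bochner_Integration.integrable_mult_right) auto
  ultimately show ?thesis by simp
qed

lemma span_orth:
  fixes G :: "('a \<Rightarrow> real) set"
  assumes "\<forall>g\<in>G. integrable M (\<lambda>\<omega>. X \<omega> * g \<omega>) \<and> integral\<^sup>L M (\<lambda>\<omega>. X \<omega> * g \<omega>) = 0"
    "Y \<in> lin_span_rv G"
  shows "integrable M (\<lambda>\<omega>. X \<omega> * Y \<omega>) \<and> integral\<^sup>L M (\<lambda>\<omega>. X \<omega> * Y \<omega>) = 0"
proof -
  obtain n c g where Y: "Y = (\<lambda>\<omega>. \<Sum>i<(n::nat). c i * g i \<omega>)" and g: "\<forall>i<n. g i \<in> G"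
  proof -
    have "\<exists>n c g. Y = (\<lambda>\<omega>. \<Sum>i<(n::nat). c i * g i \<omega>) \<and> (\<forall>i<n. g i \<in> G)"
      using assms(2) unfolding lin_span_rv_def by simp
    then show ?thesis using that by blast
  qed
  have e: "(\<lambda>\<omega>. X \<omega> * Y \<omega>) = (\<lambda>\<omega>. \<Sum>i<n. c i * (X \<omega> * g i \<omega>))"
    unfolding Y sum_distrib_left by (auto simp: algebra_simps)
  have i: "\<And>i. i \<in> {..<n} \<Longrightarrow> integrable M (\<lambda>\<omega>. c i * (X \<omega> * g i \<omega>))" using g assms(1) by auto
  show ?thesis unfolding e using i
    apply (simp add: Bochner_Integration.integral_sum[OF i])
    using g assms(1) by auto
qed

lemma closure_orth:
  fixes G :: "('a \<Rightarrow> real) set" and X :: "'a \<Rightarrow> real"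
  assumes X: "X \<in> borel_measurable M" "integrable M (\<lambda>\<omega>. (X \<omega>)\<^sup>2)"
    and sp: "\<And>Y. Y \<in> lin_span_rv G \<Longrightarrow> Y \<in> borel_measurable M \<and> integrable M (\<lambda>\<omega>. (Y \<omega>)\<^sup>2)"
    and so: "\<And>Y. Y \<in> lin_span_rv G \<Longrightarrow> integrable M (\<lambda>\<omega>. X \<omega> * Y \<omega>) \<and> integral\<^sup>L M (\<lambda>\<omega>. X \<omega> * Y \<omega>) = 0"
    and Y: "Y \<in> gen_hilbert M G"
  shows "integrable M (\<lambda>\<omega>. X \<omega> * Y \<omega>) \<and> integral\<^sup>L M (\<lambda>\<omega>. X \<omega> * Y \<omega>) = 0"
proof -
  obtain Yn where Yn: "\<And>n. Yn n \<in> lin_span_rv G"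
    and lim: "(\<lambda>n. integral\<^sup>L M (\<lambda>\<omega>. (Y \<omega> - Yn n \<omega>)\<^sup>2)) \<longlonglongrightarrow> 0"
    and Ym: "Y \<in> borel_measurable M" and Y2: "integrable M (\<lambda>\<omega>. (Y \<omega>)\<^sup>2)"
    using Y unfolding gen_hilbert_def by blast
  have XY: "integrable M (\<lambda>\<omega>. X \<omega> * Y \<omega>)" using sq_int_prod[OF X(1) Ym X(2) Y2] .
  define c where "c = integral\<^sup>L M (\<lambda>\<omega>. X \<omega> * Y \<omega>)"
  define A where "A = integral\<^sup>L M (\<lambda>\<omega>. (X \<omega>)\<^sup>2)"
  have A0: "A \<ge> 0" unfolding A_def by (rule integral_nonneg_AE) auto
  have bound: "\<bar>c\<bar> \<le> (a * A + integral\<^sup>L M (\<lambda>\<omega>. (Y \<omega> - Yn n \<omega>)\<^sup>2) / a) / 2" if a: "a > 0" for a n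
  proof -
    let ?Z = "\<lambda>\<omega>. Y \<omega> - Yn n \<omega>"
    have Zm: "?Z \<in> borel_measurable M" using Ym sp[OF Yn] by (auto intro!: borel_measurable_diff)
    have Ynm: "Yn n \<in> borel_measurable M" and Yn2: "integrable M (\<lambda>\<omega>. (Yn n \<omega>)\<^sup>2)" using sp[OF Yn] by auto
    have Z2: "integrable M (\<lambda>\<omega>. (?Z \<omega>)\<^sup>2)"
    proof -
      have "(\<lambda>\<omega>. (?Z \<omega>)\<^sup>2) = (\<lambda>\<omega>. (Y \<omega>)\<^sup>2 + (Yn n \<omega>)\<^sup>2 - 2 * (Y \<omega> * Yn n \<omega>))"
        by (auto simp: power2_eq_square algebra_simps)
      moreover have "integrable M (\<lambda>\<omega>. Y \<omega> * Yn n \<omega>)" by (rule sq_int_prod[OF Ym Ynm Y2 Yn2])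
      ultimately show ?thesis using Y2 Yn2 by auto
    qed
    have XYn: "integrable M (\<lambda>\<omega>. X \<omega> * Yn n \<omega>)" "integral\<^sup>L M (\<lambda>\<omega>. X \<omega> * Yn n \<omega>) = 0" using so[OF Yn] by auto
    have XZ: "integrable M (\<lambda>\<omega>. X \<omega> * ?Z \<omega>)" using XY XYn(1) by (simp add: right_diff_distrib)
    have cZ: "c = integral\<^sup>L M (\<lambda>\<omega>. X \<omega> * ?Z \<omega>)"
      unfolding c_def using XY XYn by (simp add: right_diff_distrib)
    have pw: "\<bar>X \<omega> * ?Z \<omega>\<bar> \<le> (a * (X \<omega>)\<^sup>2 + (?Z \<omega>)\<^sup>2 / a) / 2" for \<omega>
    proof -
      have "0 \<le> (a * \<bar>X \<omega>\<bar> - \<bar>?Z \<omega>\<bar>)\<^sup>2" by simp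
      hence "2 * a * \<bar>X \<omega>\<bar> * \<bar>?Z \<omega>\<bar> \<le> a * a * (X \<omega>)\<^sup>2 + (?Z \<omega>)\<^sup>2"
        by (simp add: power2_eq_square algebra_simps)
      hence "a * (2 * \<bar>X \<omega> * ?Z \<omega>\<bar>) \<le> a * (a * (X \<omega>)\<^sup>2 + (?Z \<omega>)\<^sup>2 / a)"
        using a by (simp add: abs_mult distrib_left mult.assoc mult.left_commute)
      hence "2 * \<bar>X \<omega> * ?Z \<omega>\<bar> \<le> a * (X \<omega>)\<^sup>2 + (?Z \<omega>)\<^sup>2 / a" using a by simp
      thus ?thesis by simp
    qed
    have pw2: "- (X \<omega> * ?Z \<omega>) \<le> (a * (X \<omega>)\<^sup>2 + (?Z \<omega>)\<^sup>2 / a) / 2" for \<omega>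
      using pw[of \<omega>] by linarith
    have R: "integrable M (\<lambda>\<omega>. (a * (X \<omega>)\<^sup>2 + (?Z \<omega>)\<^sup>2 / a) / 2)" using X(2) Z2 by auto
    have "integral\<^sup>L M (\<lambda>\<omega>. (a * (X \<omega>)\<^sup>2 + (?Z \<omega>)\<^sup>2 / a) / 2)
        = (a * A + integral\<^sup>L M (\<lambda>\<omega>. (?Z \<omega>)\<^sup>2) / a) / 2"
      unfolding A_def using X(2) Z2 by simp
    moreover have "c \<le> integral\<^sup>L M (\<lambda>\<omega>. (a * (X \<omega>)\<^sup>2 + (?Z \<omega>)\<^sup>2 / a) / 2)"
      unfolding cZ by (rule integral_mono[OF XZ R]) (rule order_trans[OF abs_ge_self pw])
    moreover have "- c \<le> integral\<^sup>L M (\<lambda>\<omega>. (a * (X \<omega>)\<^sup>2 + (?Z \<omega>)\<^sup>2 / a) / 2)"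
    proof -
      have "integral\<^sup>L M (\<lambda>\<omega>. - (X \<omega> * ?Z \<omega>)) \<le> integral\<^sup>L M (\<lambda>\<omega>. (a * (X \<omega>)\<^sup>2 + (?Z \<omega>)\<^sup>2 / a) / 2)"
        by (rule integral_mono) (use XZ R pw2 in auto)
      thus ?thesis unfolding cZ by simp
    qed
    ultimately show ?thesis by linarith
  qed
  have "c = 0"
  proof (rule ccontr)
    assume "c \<noteq> 0"
    define a where "a = \<bar>c\<bar> / (A + 1)"
    have a0: "a > 0" unfolding a_def using \<open>c \<noteq> 0\<close> A0 by auto
    have aA: "a * A < \<bar>c\<bar>" unfolding a_def using \<open>c \<noteq> 0\<close> A0 by (simp add: field_simps)
    have "eventually (\<lambda>n. integral\<^sup>L M (\<lambda>\<omega>. (Y \<omega> - Yn n \<omega>)\<^sup>2) < a * \<bar>c\<bar>) sequentially"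
      using lim a0 \<open>c \<noteq> 0\<close> by (intro order_tendstoD) auto
    then obtain n where n: "integral\<^sup>L M (\<lambda>\<omega>. (Y \<omega> - Yn n \<omega>)\<^sup>2) < a * \<bar>c\<bar>" by (auto dest: eventually_happens)
    have "integral\<^sup>L M (\<lambda>\<omega>. (Y \<omega> - Yn n \<omega>)\<^sup>2) / a < \<bar>c\<bar>" using n a0 by (simp add: field_simps)
    moreover note bound[OF a0, of n]
    ultimately show False using aA by (simp add: field_simps)
  qed
  with XY c_def show ?thesis by simp
qed

lemma zr_stack_Inl: "zr p u (stack z h) w t \<omega> $ Inl i = zr p u z w t \<omega> $ i"
  by (simp add: zr_def stack_def)
lemma zr_stack_Inr: "zr p u (stack z h) w t \<omega> $ Inr i = zr p u h w t \<omega> $ i"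
  by (simp add: zr_def stack_def)
lemma stack_Inl: "stack z h t \<omega> $ Inl i = z t \<omega> $ i"
  by (simp add: stack_def)

lemma RC_2: "RC M p u L r \<Longrightarrow> w \<noteq> [] \<Longrightarrow> integrable M (\<lambda>\<omega>. zr p u r w t \<omega> $ i)"
  unfolding RC_def apply (drule conjunct2, drule conjunct1) by blast
lemma RC_4: "RC M p u L r \<Longrightarrow> w \<noteq> [] \<Longrightarrow> v \<noteq> [] \<Longrightarrow>
        integrable M (\<lambda>\<omega>. zr p u r w t \<omega> $ i * zr p u r v t \<omega> $ j) \<and>
        integral\<^sup>L M (\<lambda>\<omega>. zr p u r w t \<omega> $ i * zr p u r v t \<omega> $ j)
        = integral\<^sup>L M (\<lambda>\<omega>. zr p u r w 0 \<omega> $ i * zr p u r v 0 \<omega> $ j)"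
  unfolding RC_def apply (drule conjunct2, drule conjunct2, drule conjunct2, drule conjunct1) by blast
lemma RC_7: "RC M p u L r \<Longrightarrow> w \<noteq> [] \<Longrightarrow> v \<noteq> [] \<Longrightarrow> (w @ [\<sigma>] \<in> L \<or> v @ [\<sigma>] \<in> L) \<Longrightarrow>
        Tmat M p u r (w @ [\<sigma>]) (v @ [\<sigma>]) = Tmat M p u r w v"
  unfolding RC_def apply (drule conjunct2, drule conjunct2, drule conjunct2, drule conjunct2, drule conjunct2, drule conjunct2, drule conjunct1) by blast
lemma RC_9: "RC M p u L r \<Longrightarrow> w \<noteq> [] \<Longrightarrow> Tmat M p u r (w @ [\<sigma>]) [\<sigma>] = transpose (Lmat M p u r w)"
  unfolding RC_def apply (drule conjunct2, drule conjunct2, drule conjunct2, drule conjunct2, drule conjunct2, drule conjunct2, drule conjunct2, drule conjunct2, drule conjunct1) by blast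
lemma RC_10: "RC M p u L r \<Longrightarrow> w \<noteq> [] \<Longrightarrow> v \<noteq> [] \<Longrightarrow> (w \<notin> L \<or> v \<notin> L) \<Longrightarrow> Tmat M p u r w v = 0"
  unfolding RC_def apply (drule conjunct2, drule conjunct2, drule conjunct2, drule conjunct2, drule conjunct2, drule conjunct2, drule conjunct2, drule conjunct2, drule conjunct2, drule conjunct1) by blast

lemma gen_in_Hspace:
  assumes RC: "RC M p u L (stack z h)" and v: "v \<noteq> []"
  shows "(\<lambda>\<omega>. zr p u h v t \<omega> $ j) \<in> Hspace M p u h t"
proof -
  let ?g = "\<lambda>\<omega>. zr p u h v t \<omega> $ j"
  have i1: "integrable M ?g" using RC_2[OF RC v, of t "Inr j"] by (simp add: zr_stack_Inr)
  have i2: "integrable M (\<lambda>\<omega>. ?g \<omega> * ?g \<omega>)"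
    using RC_4[OF RC v v, of t "Inr j" "Inr j"] by (simp add: zr_stack_Inr)
  have sp: "?g \<in> lin_span_rv {(\<lambda>\<omega>. zr p u h v t \<omega> $ i) | v i. v \<noteq> []}"
    unfolding lin_span_rv_def
    apply (rule CollectI)
    apply (rule exI[of _ "1::nat"], rule exI[of _ "\<lambda>_. 1"], rule exI[of _ "\<lambda>_. ?g"])
    using v by auto
  show ?thesis unfolding Hspace_def gen_hilbert_def
    using i1 i2 sp by (auto simp: power2_eq_square intro!: exI[of _ "\<lambda>_. ?g"])
qed

lemma key_T:
  assumes RC: "RC M p u L (stack z h)"
    and orth: "\<forall>t i. orth_to M (\<lambda>\<omega>. z t \<omega> $ i) (Hspace M p u h t)"
  shows "w \<noteq> [] \<Longrightarrow> v \<noteq> [] \<Longrightarrow> Tmat M p u (stack z h) (v @ w) w $ Inr j $ Inl i = 0"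
proof (induction w arbitrary: v rule: rev_induct)
  case Nil
  then show ?case by simp
next
  case (snoc \<sigma> w')
  show ?case
  proof (cases "w' = []")
    case True
    have "Tmat M p u (stack z h) (v @ [\<sigma>]) [\<sigma>] = transpose (Lmat M p u (stack z h) v)"
      using RC_9[OF RC snoc.prems(2)] .
    then have "Tmat M p u (stack z h) (v @ w' @ [\<sigma>]) (w' @ [\<sigma>]) $ Inr j $ Inl i
       = integral\<^sup>L M (\<lambda>\<omega>. z 0 \<omega> $ i * zr p u h v 0 \<omega> $ j)"
      using True by (simp add: transpose_def Lmat_def stack_Inl zr_stack_Inr)
    also have "\<dots> = 0"
      using bspec[OF spec[OF spec[OF orth[unfolded orth_to_def], of 0], of i] gen_in_Hspace[OF RC snoc.prems(2), of 0 j]] by simp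
    finally show ?thesis .
  next
    case False
    show ?thesis
    proof (cases "(v @ w') @ [\<sigma>] \<in> L \<or> w' @ [\<sigma>] \<in> L")
      case True
      then have "Tmat M p u (stack z h) ((v @ w') @ [\<sigma>]) (w' @ [\<sigma>]) = Tmat M p u (stack z h) (v @ w') w'"
        using RC_7[OF RC _ False True] snoc.prems(2) by simp
      then show ?thesis using snoc.IH[OF False snoc.prems(2)] by simp
    next
      case nt: False
      have "Tmat M p u (stack z h) ((v @ w') @ [\<sigma>]) (w' @ [\<sigma>]) = 0"
        using RC_10[OF RC _ _, of "(v @ w') @ [\<sigma>]" "w' @ [\<sigma>]"] nt by simp
      then show ?thesis by simp
    qed
  qed
qed

theorem mainTheorem5:
  fixes M :: "'a measure"
    and p :: "'s::finite \<Rightarrow> real"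
    and u :: "'s \<Rightarrow> int \<Rightarrow> 'a \<Rightarrow> real"
    and L :: "'s list set"
    and z :: "int \<Rightarrow> 'a \<Rightarrow> real^'p::finite"
    and h :: "int \<Rightarrow> 'a \<Rightarrow> real^'l::finite"
  assumes "prob_space M"
    and "inputs_ok M p u"
    and "admissible M u L"
    and "RC M p u L (stack z h)"
    and "\<forall>t i. orth_to M (\<lambda>\<omega>. z t \<omega> $ i) (Hspace M p u h t)"
  shows "\<forall>w t i. w \<noteq> [] \<longrightarrow> orth_to M (\<lambda>\<omega>. zr p u z w t \<omega> $ i) (Hspace_w M p u h t w)"
proof (intro allI impI)
  fix w :: "'s list" and t i
  assume w: "w \<noteq> []"
  note RC = assms(4)
  have RC1: "\<And>w t k. w \<noteq> [] \<Longrightarrow> integrable M (\<lambda>\<omega>. zr p u (stack z h) w t \<omega> $ k)"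
    using RC_2[OF RC] by blast
  have RC4: "\<And>w v t k l. w \<noteq> [] \<Longrightarrow> v \<noteq> [] \<Longrightarrow>
        integrable M (\<lambda>\<omega>. zr p u (stack z h) w t \<omega> $ k * zr p u (stack z h) v t \<omega> $ l) \<and>
        integral\<^sup>L M (\<lambda>\<omega>. zr p u (stack z h) w t \<omega> $ k * zr p u (stack z h) v t \<omega> $ l)
        = integral\<^sup>L M (\<lambda>\<omega>. zr p u (stack z h) w 0 \<omega> $ k * zr p u (stack z h) v 0 \<omega> $ l)"
    using RC_4[OF RC] by blast
  let ?X = "\<lambda>\<omega>. zr p u z w t \<omega> $ i"
  let ?G = "{(\<lambda>\<omega>. zr p u h (v @ w) t \<omega> $ j) | v j. v \<noteq> []}"
  have Xm: "?X \<in> borel_measurable M" using RC1[OF w, of t "Inl i"] by (simp add: zr_stack_Inl)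
  have X2: "integrable M (\<lambda>\<omega>. (?X \<omega>)\<^sup>2)" using RC4[OF w w, of t "Inl i" "Inl i"]
    by (simp add: zr_stack_Inl power2_eq_square)
  have Gprod: "\<forall>g\<in>?G. \<forall>g'\<in>?G. integrable M (\<lambda>\<omega>. g \<omega> * g' \<omega>)"
  proof (intro ballI)
    fix g g' assume "g \<in> ?G" "g' \<in> ?G"
    then obtain v j v' j' where "g = (\<lambda>\<omega>. zr p u h (v @ w) t \<omega> $ j)" "v \<noteq> []"
      "g' = (\<lambda>\<omega>. zr p u h (v' @ w) t \<omega> $ j')" "v' \<noteq> []" by blast
    then show "integrable M (\<lambda>\<omega>. g \<omega> * g' \<omega>)"
      using RC4[of "v @ w" "v' @ w" t "Inr j" "Inr j'"] by (simp add: zr_stack_Inr)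
  qed
  have Gm: "\<forall>g\<in>?G. g \<in> borel_measurable M"
  proof
    fix g assume "g \<in> ?G"
    then obtain v j where "g = (\<lambda>\<omega>. zr p u h (v @ w) t \<omega> $ j)" "v \<noteq> []" by blast
    then show "g \<in> borel_measurable M"
      using RC1[of "v @ w" t "Inr j"] by (simp add: zr_stack_Inr)
  qed
  have Gorth: "\<forall>g\<in>?G. integrable M (\<lambda>\<omega>. ?X \<omega> * g \<omega>) \<and> integral\<^sup>L M (\<lambda>\<omega>. ?X \<omega> * g \<omega>) = 0"
  proof
    fix g assume "g \<in> ?G"
    then obtain v j where g: "g = (\<lambda>\<omega>. zr p u h (v @ w) t \<omega> $ j)" and v: "v \<noteq> []" by blast
    have vw: "v @ w \<noteq> []" using v by simp
    have I: "integrable M (\<lambda>\<omega>. ?X \<omega> * g \<omega>)"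
      using RC4[OF w vw, of t "Inl i" "Inr j"] g by (simp add: zr_stack_Inl zr_stack_Inr)
    have "integral\<^sup>L M (\<lambda>\<omega>. ?X \<omega> * g \<omega>)
        = integral\<^sup>L M (\<lambda>\<omega>. zr p u (stack z h) w 0 \<omega> $ Inl i * zr p u (stack z h) (v @ w) 0 \<omega> $ Inr j)"
      using RC4[OF w vw, of t "Inl i" "Inr j"] g by (simp add: zr_stack_Inl zr_stack_Inr)
    also have "\<dots> = Tmat M p u (stack z h) (v @ w) w $ Inr j $ Inl i"
      by (simp add: Tmat_def mult.commute)
    also have "\<dots> = 0" by (rule key_T[OF RC assms(5) w v])
    finally show "integrable M (\<lambda>\<omega>. ?X \<omega> * g \<omega>) \<and> integral\<^sup>L M (\<lambda>\<omega>. ?X \<omega> * g \<omega>) = 0"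
      using I by simp
  qed
  show "orth_to M ?X (Hspace_w M p u h t w)"
    unfolding orth_to_def Hspace_w_def
  proof
    fix Y assume Y: "Y \<in> gen_hilbert M ?G"
    show "integrable M (\<lambda>\<omega>. ?X \<omega> * Y \<omega>) \<and> integral\<^sup>L M (\<lambda>\<omega>. ?X \<omega> * Y \<omega>) = 0"
      by (rule closure_orth[OF Xm X2 span_props[OF Gprod Gm] span_orth[OF Gorth] Y])
  qed
qed

end
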